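(* Let $H$ be a real Hilbert space, $A:H\to c_0$ bounded linear with adjoint $A^*:\ell^1\to H$ (identifying $c_0^*=\ell^1$), let $H_n\subset H$ be a subspace of dimension $n$ with $\mathcal N(A)\cap H_n=\{0\}$, let $P_n$ be the orthogonal projection onto $H_n$, and let $f^\delta\in H$. Then $u^n\in\ell^1$ is a solution of $$\min_{u\in\ell^1}\|u\|_1\quad\text{subject to}\quad \langle z,A^*u\rangle=\langle z,f^\delta\rangle\ \ \forall z\in H_n$$ if and only if $u^n\in E_n$ and $\langle z,A^*u^n\rangle=\langle z,f^\delta\rangle$ for all $z\in H_n$, where $$E_n=(\partial\|\cdot\|_1)^{-1}(AH_n)=\{u\in\ell^1:\ \partial\|\cdot\|_1(u)\cap AH_n\neq\emptyset\}.$$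
   Context: For $u\in\ell^1$, $\partial\|\cdot\|_1(u)=\{\xi\in\ell^\infty:\ \|\xi\|_\infty\le1,\ \sum_i\xi_iu_i=\|u\|_1\}$, i.e. $\xi_i=u_i/|u_i|$ if $u_i\ne0$ and $\xi_i\in[-1,1]$ if $u_i=0$. $AH_n=\{Az: z\in H_n\}\subset c_0\subset\ell^\infty$. $A^*$ is defined by $\langle A^*u,z\rangle=\sum_iu_i(Az)_i$. *)

theory Defs
  imports "HOL-Analysis.Analysis"
begin

definition ell1 :: "(nat \<Rightarrow> real) set" where
  "ell1 = {u. summable (\<lambda>i. \<bar>u i\<bar>)}"

definition c0 :: "(nat \<Rightarrow> real) set" where
  "c0 = {x. x \<longlonglongrightarrow> 0}"

definition l1norm :: "(nat \<Rightarrow> real) \<Rightarrow> real" where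
  "l1norm u = (\<Sum>i. \<bar>u i\<bar>)"

definition subdiff_l1 :: "(nat \<Rightarrow> real) \<Rightarrow> (nat \<Rightarrow> real) set" where
  "subdiff_l1 u = {\<xi>. (\<forall>i. \<bar>\<xi> i\<bar> \<le> 1) \<and> (\<Sum>i. \<xi> i * u i) = l1norm u}"

definition En :: "('h \<Rightarrow> (nat \<Rightarrow> real)) \<Rightarrow> 'h set \<Rightarrow> (nat \<Rightarrow> real) set" where
  "En A Hn = {u \<in> ell1. subdiff_l1 u \<inter> A ` Hn \<noteq> {}}"

definition bounded_linear_c0 :: "('h::real_normed_vector \<Rightarrow> (nat \<Rightarrow> real)) \<Rightarrow> bool" where
  "bounded_linear_c0 A \<longleftrightarrow> (\<forall>x y i. A (x + y) i = A x i + A y i) \<and>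
     (\<forall>c x i. A (c *\<^sub>R x) i = c * A x i) \<and> (\<forall>x. A x \<in> c0) \<and>
     (\<exists>K. \<forall>x i. \<bar>A x i\<bar> \<le> K * norm x)"

definition is_adjoint_l1 :: "('h::real_inner \<Rightarrow> (nat \<Rightarrow> real)) \<Rightarrow> ((nat \<Rightarrow> real) \<Rightarrow> 'h) \<Rightarrow> bool" where
  "is_adjoint_l1 A Astar \<longleftrightarrow> (\<forall>u\<in>ell1. \<forall>z. inner (Astar u) z = (\<Sum>i. u i * A z i))"

definition constraint :: "((nat \<Rightarrow> real) \<Rightarrow> 'h::real_inner) \<Rightarrow> 'h set \<Rightarrow> 'h \<Rightarrow> (nat \<Rightarrow> real) \<Rightarrow> bool" where
  "constraint Astar Hn f u \<longleftrightarrow> (\<forall>z\<in>Hn. inner z (Astar u) = inner z f)"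

definition is_min_solution :: "((nat \<Rightarrow> real) \<Rightarrow> 'h::real_inner) \<Rightarrow> 'h set \<Rightarrow> 'h \<Rightarrow> (nat \<Rightarrow> real) \<Rightarrow> bool" where
  "is_min_solution Astar Hn f un \<longleftrightarrow> un \<in> ell1 \<and> constraint Astar Hn f un \<and>
     (\<forall>u\<in>ell1. constraint Astar Hn f u \<longrightarrow> l1norm un \<le> l1norm u)"

end

theory Submission
  imports Defs
begin


lemma hb_step:
  fixes q g :: "'a::real_vector \<Rightarrow> real"
  assumes D: "subspace D" and M: "subspace M" "M \<subseteq> D" and a: "a \<in> D"
   and sub: "\<forall>x\<in>D. \<forall>y\<in>D. q (x+y) \<le> q x + q y"
   and hom: "\<forall>x\<in>D. \<forall>t\<ge>0. q (t *\<^sub>R x) = t * q x"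
   and gadd: "\<forall>x\<in>M. \<forall>y\<in>M. g (x+y) = g x + g y"
   and gsc: "\<forall>x\<in>M. \<forall>t. g (t *\<^sub>R x) = t * g x"
   and gle: "\<forall>x\<in>M. g x \<le> q x"
  shows "\<exists>G. (\<forall>x\<in>M. G x = g x) \<and>
     (\<forall>x\<in>span (insert a M). \<forall>y\<in>span (insert a M). G (x+y) = G x + G y) \<and>
     (\<forall>x\<in>span (insert a M). \<forall>t. G (t *\<^sub>R x) = t * G x) \<and>
     (\<forall>x\<in>span (insert a M). G x \<le> q x) \<and>
     (a \<notin> M \<longrightarrow> G a = Inf {q (y + a) - g y | y. y \<in> M})"
proof (cases "a \<in> M")
  case True
  then have "span (insert a M) = M" using M by (simp add: insert_absorb)
  then show ?thesis using True gadd gsc gle by auto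
next
  case False
  define c where "c = Inf {q (y + a) - g y | y. y \<in> M}"
  have key: "g y - q (y - a) \<le> q (y' + a) - g y'" if "y \<in> M" "y' \<in> M" for y y'
  proof -
    have yD: "y \<in> D" "y' \<in> D" using that M by auto
    have "g y + g y' = g (y + y')" using gadd that by auto
    also have "\<dots> \<le> q (y + y')" using gle that M(1) by (simp add: subspace_add)
    also have "q (y + y') \<le> q (y - a) + q (y' + a)"
    proof -
      have e: "(y - a) + (y' + a) = y + y'" by simp
      have "y - a \<in> D" "y' + a \<in> D" using yD a D by (auto simp: subspace_add subspace_diff)
      then show ?thesis using sub e by metis
    qed
    finally show ?thesis by simp
  qed
  have z: "0 \<in> M" using M(1) by (simp add: subspace_0)
  have c1: "c \<le> q (y + a) - g y" if "y \<in> M" for y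
    unfolding c_def
    by (rule cInf_lower) (use that key z in \<open>auto intro!: bdd_belowI[where m="g 0 - q (0 - a)"]\<close>)
  have c2: "g y - q (y - a) \<le> c" if "y \<in> M" for y
    unfolding c_def
    by (rule cInf_greatest) (use that key z in auto)
  have uniq: "k = k'" if "x \<in> M" "x' \<in> M" "x + k *\<^sub>R a = x' + k' *\<^sub>R a" for x x' k k'
  proof (rule ccontr)
    assume "k \<noteq> k'"
    have "(k - k') *\<^sub>R a = x' - x" using that(3) by (simp add: algebra_simps)
    then have "(1/(k-k')) *\<^sub>R ((k - k') *\<^sub>R a) = (1/(k-k')) *\<^sub>R (x' - x)" by simp
    then have "a = (1/(k-k')) *\<^sub>R (x' - x)" using \<open>k \<noteq> k'\<close> by simp
    also have "\<dots> \<in> M" using M(1) that(1,2) by (simp add: subspace_scale subspace_diff)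
    finally show False using False by simp
  qed
  define T where "T v = (SOME k. v - k *\<^sub>R a \<in> M)" for v
  define G where "G v = g (v - T v *\<^sub>R a) + T v * c" for v
  have Gx: "G (x + k *\<^sub>R a) = g x + k * c" if "x \<in> M" for x k
  proof -
    have ex: "\<exists>k'. x + k *\<^sub>R a - k' *\<^sub>R a \<in> M" using that by (intro exI[of _ k]) simp
    have "x + k *\<^sub>R a - T (x + k *\<^sub>R a) *\<^sub>R a \<in> M"
      unfolding T_def by (rule someI_ex[OF ex])
    then have "T (x + k *\<^sub>R a) = k"
      using uniq[OF that, of "x + k *\<^sub>R a - T (x + k *\<^sub>R a) *\<^sub>R a" k "T (x + k *\<^sub>R a)"]
      by (simp add: algebra_simps)
    then show ?thesis unfolding G_def by simp
  qed
  have spM: "span M = M" using M(1) by simp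
  have sp: "v \<in> span (insert a M) \<longleftrightarrow> (\<exists>x k. x \<in> M \<and> v = x + k *\<^sub>R a)" for v
  proof -
    have "v \<in> span (insert a M) \<longleftrightarrow> (\<exists>k. v - k *\<^sub>R a \<in> M)"
      using span_insert[of a M] spM by auto
    also have "\<dots> \<longleftrightarrow> (\<exists>x k. x \<in> M \<and> v = x + k *\<^sub>R a)"
    proof
      assume "\<exists>k. v - k *\<^sub>R a \<in> M"
      then obtain k where "v - k *\<^sub>R a \<in> M" by blast
      then show "\<exists>x k. x \<in> M \<and> v = x + k *\<^sub>R a" by (intro exI[of _ "v - k *\<^sub>R a"] exI[of _ k]) simp
    next
      assume "\<exists>x k. x \<in> M \<and> v = x + k *\<^sub>R a"
      then obtain x k where "x \<in> M" "v = x + k *\<^sub>R a" by blast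
      then show "\<exists>k. v - k *\<^sub>R a \<in> M" by (intro exI[of _ k]) simp
    qed
    finally show ?thesis .
  qed
  have G0: "\<forall>x\<in>M. G x = g x" using Gx[of _ 0] by simp
  have Gadd: "G (v + w) = G v + G w" if vS: "v \<in> span (insert a M)" and wS: "w \<in> span (insert a M)" for v w
  proof -
    obtain x k x' k' where xk: "x \<in> M" "x' \<in> M" "v = x + k *\<^sub>R a" "w = x' + k' *\<^sub>R a"
      using vS wS sp by meson
    have e: "v + w = (x + x') + (k + k') *\<^sub>R a" using xk by (simp add: algebra_simps)
    have xx: "x + x' \<in> M" using xk M(1) by (simp add: subspace_add)
    have "G (v + w) = g (x + x') + (k + k') * c" unfolding e by (rule Gx[OF xx])
    also have "\<dots> = (g x + k * c) + (g x' + k' * c)" using gadd xk by (simp add: algebra_simps)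
    also have "\<dots> = G v + G w" using Gx xk by simp
    finally show ?thesis .
  qed
  have Gsc: "G (t *\<^sub>R v) = t * G v" if vS: "v \<in> span (insert a M)" for v t
  proof -
    obtain x k where xk: "x \<in> M" "v = x + k *\<^sub>R a" using vS sp by meson
    have e: "t *\<^sub>R v = t *\<^sub>R x + (t * k) *\<^sub>R a" using xk by (simp add: algebra_simps)
    have xx: "t *\<^sub>R x \<in> M" using xk M(1) by (simp add: subspace_scale)
    have "G (t *\<^sub>R v) = g (t *\<^sub>R x) + (t * k) * c" unfolding e by (rule Gx[OF xx])
    also have "\<dots> = t * (g x + k * c)" using gsc xk by (simp add: algebra_simps)
    also have "\<dots> = t * G v" using Gx xk by simp
    finally show ?thesis .
  qed
  have Gle: "G v \<le> q v" if vS: "v \<in> span (insert a M)" for v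
  proof -
    obtain x k where xM: "x \<in> M" and v: "v = x + k *\<^sub>R a" using vS sp by meson
    have xD: "x \<in> D" using xM M by auto
    consider "k = 0" | "k > 0" | "k < 0" by linarith
    then show ?thesis
    proof cases
      case 1 then show ?thesis using v xM Gx[OF xM, of 0] gle by simp
    next
      case 2
      let ?y = "(1/k) *\<^sub>R x"
      have yM: "?y \<in> M" using xM M(1) by (simp add: subspace_scale)
      have "c \<le> q (?y + a) - g ?y" by (rule c1[OF yM])
      then have "k * c \<le> k * q (?y + a) - k * g ?y" using 2
        by (simp add: right_diff_distrib[symmetric] mult_left_mono)
      also have "k * g ?y = g x" using gsc xM 2 by simp
      also have "k * q (?y + a) = q (k *\<^sub>R (?y + a))"
        using hom 2 D yM M a by (simp add: subset_iff subspace_add)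
      also have "k *\<^sub>R (?y + a) = v" using v 2 by (simp add: algebra_simps)
      finally show ?thesis using Gx[OF xM, of k] v by simp
    next
      case 3
      define s where "s = -k"
      have s: "s > 0" using 3 s_def by simp
      let ?y = "(1/s) *\<^sub>R x"
      have yM: "?y \<in> M" using xM M(1) by (simp add: subspace_scale)
      have "g ?y - q (?y - a) \<le> c" by (rule c2[OF yM])
      then have "s * g ?y - s * q (?y - a) \<le> s * c" using s
        by (simp add: right_diff_distrib[symmetric] mult_left_mono)
      also have "s * g ?y = g x" using gsc xM s by simp
      also have "s * q (?y - a) = q (s *\<^sub>R (?y - a))"
        using hom s D yM M a by (simp add: subset_iff subspace_diff)
      also have "s *\<^sub>R (?y - a) = v" using v s s_def by (simp add: algebra_simps)
      finally show ?thesis using Gx[OF xM, of k] v s_def by simp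
    qed
  qed
  have g0: "g 0 = 0" using gsc z by (metis mult_zero_left scale_zero_left)
  have "G a = c" using Gx[OF z, of 1] g0 by simp
  then show ?thesis using G0 Gadd Gsc Gle False c_def by blast
qed

lemma span_span_Un: "span (span A \<union> B) = span (A \<union> B)"
proof
  show "span (span A \<union> B) \<subseteq> span (A \<union> B)"
    by (rule span_minimal) (auto intro: span_mono[THEN subsetD] span_base)
  show "span (A \<union> B) \<subseteq> span (span A \<union> B)"
    by (rule span_mono) (use span_superset in auto)
qed

lemma hb_ext:
  fixes q :: "'a::real_vector \<Rightarrow> real"
  assumes T: "finite T" and D: "subspace D" and TD: "T \<subseteq> D"
   and sub: "\<forall>x\<in>D. \<forall>y\<in>D. q (x+y) \<le> q x + q y"
   and hom: "\<forall>x\<in>D. \<forall>t\<ge>0. q (t *\<^sub>R x) = t * q x"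
   and "subspace M" "M \<subseteq> D"
     "\<forall>x\<in>M. \<forall>y\<in>M. g (x+y) = g x + g y"
     "\<forall>x\<in>M. \<forall>t. g (t *\<^sub>R x) = t * g x"
     "\<forall>x\<in>M. g x \<le> q x"
  shows "\<exists>G. (\<forall>x\<in>M. G x = g x) \<and>
     (\<forall>x\<in>span (M \<union> T). \<forall>y\<in>span (M \<union> T). G (x+y) = G x + G y) \<and>
     (\<forall>x\<in>span (M \<union> T). \<forall>t. G (t *\<^sub>R x) = t * G x) \<and>
     (\<forall>x\<in>span (M \<union> T). G x \<le> q x)"
  using T TD assms(6-10)
proof (induction T arbitrary: M g rule: finite_induct)
  case empty
  have sM: "span M = M" using empty.prems(2) span_eq_iff by blast
  show ?case unfolding Un_empty_right sM using empty.prems by blast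
next
  case (insert a T)
  have aD: "a \<in> D" and TD': "T \<subseteq> D" using insert.prems by auto
  obtain G1 where G1: "\<forall>x\<in>M. G1 x = g x"
     "\<forall>x\<in>span (insert a M). \<forall>y\<in>span (insert a M). G1 (x+y) = G1 x + G1 y"
     "\<forall>x\<in>span (insert a M). \<forall>t. G1 (t *\<^sub>R x) = t * G1 x"
     "\<forall>x\<in>span (insert a M). G1 x \<le> q x"
    using hb_step[OF D insert.prems(2,3) aD sub hom insert.prems(4-6)] by blast
  have M1D: "span (insert a M) \<subseteq> D"
    by (rule span_minimal) (use aD insert.prems(3) D in auto)
  obtain G where G: "\<forall>x\<in>span (insert a M). G x = G1 x"
     "\<forall>x\<in>span (span (insert a M) \<union> T). \<forall>y\<in>span (span (insert a M) \<union> T). G (x+y) = G x + G y"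
     "\<forall>x\<in>span (span (insert a M) \<union> T). \<forall>t. G (t *\<^sub>R x) = t * G x"
     "\<forall>x\<in>span (span (insert a M) \<union> T). G x \<le> q x"
    using insert.IH[OF TD' subspace_span M1D G1(2,3,4)] by blast
  have e: "span (span (insert a M) \<union> T) = span (M \<union> insert a T)"
    unfolding span_span_Un by (metis Un_insert_left Un_insert_right)
  have MM: "M \<subseteq> span (insert a M)" by (meson span_superset subset_insertI subset_trans)
  have "\<forall>x\<in>M. G x = g x" using G(1) G1(1) MM by (metis subsetD)
  then show ?case using G(2-4) unfolding e by blast
qed

lemma hb_main:
  fixes q :: "'a::real_vector \<Rightarrow> real"
  assumes C: "finite C"
   and sub: "\<forall>x\<in>span C. \<forall>y\<in>span C. q (x+y) \<le> q x + q y"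
   and hom: "\<forall>x\<in>span C. \<forall>t\<ge>0. q (t *\<^sub>R x) = t * q x"
   and y0: "y0 \<in> span C"
  shows "\<exists>G. (\<forall>x\<in>span C. \<forall>y\<in>span C. G (x+y) = G x + G y) \<and>
     (\<forall>x\<in>span C. \<forall>t. G (t *\<^sub>R x) = t * G x) \<and>
     (\<forall>x\<in>span C. G x \<le> q x) \<and> G y0 = q y0"
proof -
  have "q ((0::real) *\<^sub>R 0) = 0 * q 0" using hom span_zero[of C] by blast
  then have q0: "q 0 = 0" by simp
  have CD: "C \<subseteq> span C" by (rule span_superset)
  have z: "{0} \<subseteq> span C" using span_zero by blast
  have q0': "\<forall>x\<in>{0::'a}. (0::real) \<le> q x" using q0 by simp
  have ga: "\<forall>x\<in>{0::'a}. \<forall>y\<in>{0}. (0::real) = 0 + 0" by simp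
  have gs: "\<forall>x\<in>{0::'a}. \<forall>t. (0::real) = t * 0" by simp
  show ?thesis
  proof (cases "y0 = 0")
    case True
    obtain G where G: 
     "\<forall>x\<in>span ({0} \<union> C). \<forall>y\<in>span ({0} \<union> C). G (x+y) = G x + G y"
     "\<forall>x\<in>span ({0} \<union> C). \<forall>t. G (t *\<^sub>R x) = t * G x"
     "\<forall>x\<in>span ({0} \<union> C). G x \<le> q x" "\<forall>x\<in>{0}. G x = 0"
      using hb_ext[OF C subspace_span CD sub hom subspace_single_0 z ga gs q0'] by blast
    have e0: "span ({0} \<union> C) = span C" by simp
    have "G y0 = q y0" using G(4) True q0 by simp
    then show ?thesis using G(1-3) unfolding e0 by blast
  next
    case False
    obtain G1 where G1:
     "\<forall>x\<in>span (insert y0 {0}). \<forall>y\<in>span (insert y0 {0}). G1 (x+y) = G1 x + G1 y"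
     "\<forall>x\<in>span (insert y0 {0}). \<forall>t. G1 (t *\<^sub>R x) = t * G1 x"
     "\<forall>x\<in>span (insert y0 {0}). G1 x \<le> q x"
     "y0 \<notin> {0} \<longrightarrow> G1 y0 = Inf {q (y + y0) - 0 | y. y \<in> {0}}"
      using hb_step[OF subspace_span subspace_single_0 z y0 sub hom ga gs q0'] by blast
    have "{q (y + y0) - 0 | y. y \<in> ({0}::'a set)} = {q y0}" by auto
    then have G1y: "G1 y0 = q y0" using G1(4) False by simp
    have M1D: "span (insert y0 {0}) \<subseteq> span C"
      by (rule span_minimal) (use y0 span_zero in auto)
    obtain G where G: "\<forall>x\<in>span (insert y0 {0}). G x = G1 x"
     "\<forall>x\<in>span (span (insert y0 {0}) \<union> C). \<forall>y\<in>span (span (insert y0 {0}) \<union> C). G (x+y) = G x + G y"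
     "\<forall>x\<in>span (span (insert y0 {0}) \<union> C). \<forall>t. G (t *\<^sub>R x) = t * G x"
     "\<forall>x\<in>span (span (insert y0 {0}) \<union> C). G x \<le> q x"
      using hb_ext[OF C subspace_span CD sub hom subspace_span M1D G1(1,2,3)] by blast
    have e: "span (span (insert y0 {0}) \<union> C) = span C"
      unfolding span_span_Un
    proof
      show "span (insert y0 {0} \<union> C) \<subseteq> span C"
        by (rule span_minimal) (use y0 span_zero span_superset in auto)
      show "span C \<subseteq> span (insert y0 {0} \<union> C)" by (rule span_mono) auto
    qed
    have y0s: "y0 \<in> span (insert y0 {0})" by (rule span_base) simp
    have "G y0 = q y0" using G(1) G1y y0s by simp
    then show ?thesis using G(2-4) unfolding e by blast
  qed
qed



lemma repr:
  fixes C :: "'a::real_inner set" and G :: "'a \<Rightarrow> real"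
  assumes C: "finite C" "pairwise orthogonal C" "0 \<notin> C"
   and Gadd: "\<forall>x\<in>span C. \<forall>y\<in>span C. G (x+y) = G x + G y"
   and Gsc: "\<forall>x\<in>span C. \<forall>t. G (t *\<^sub>R x) = t * G x"
  shows "\<exists>w\<in>span C. \<forall>z\<in>span C. w \<bullet> z = G z"
proof -
  define w where "w = (\<Sum>c\<in>C. (G c / (c \<bullet> c)) *\<^sub>R c)"
  have wC: "w \<in> span C" unfolding w_def
    by (intro span_sum span_scale span_base)
  have base: "w \<bullet> c' = G c'" if c': "c' \<in> C" for c'
  proof -
    have "w \<bullet> c' = (\<Sum>c\<in>C. (G c / (c \<bullet> c)) * (c \<bullet> c'))" unfolding w_def
      by (simp add: inner_sum_left)
    also have "\<dots> = (\<Sum>c\<in>C. if c = c' then G c' else 0)"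
    proof (rule sum.cong)
      fix c assume c: "c \<in> C"
      show "(G c / (c \<bullet> c)) * (c \<bullet> c') = (if c = c' then G c' else 0)"
      proof (cases "c = c'")
        case True
        have "c' \<noteq> 0" using c' C(3) by blast
        then have "c' \<bullet> c' \<noteq> 0" by simp
        then show ?thesis using True by simp
      next
        case False
        then have "c \<bullet> c' = 0" using C(2) c c' unfolding pairwise_def orthogonal_def by blast
        then show ?thesis using False by simp
      qed
    qed simp
    also have "\<dots> = G c'" using C(1) c' by simp
    finally show ?thesis .
  qed
  have "G ((0::real) *\<^sub>R 0) = 0 * G 0" using Gsc span_zero[of C] by blast
  then have G0: "G 0 = 0" by simp
  have "z \<in> span C \<and> w \<bullet> z = G z" if z: "z \<in> span C" for z
  proof (rule span_induct[OF z])
    show "subspace {z. z \<in> span C \<and> w \<bullet> z = G z}"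
      unfolding subspace_def
      using Gadd Gsc G0 span_zero[of C] by (auto simp: span_add span_scale inner_add_right)
    show "x \<in> span C \<and> w \<bullet> x = G x" if "x \<in> C" for x
      using that base span_base by blast
  qed
  then show ?thesis using wC by blast
qed

lemma ell1_summ:
  assumes "u \<in> ell1" "\<forall>i. \<bar>x i\<bar> \<le> B"
  shows "summable (\<lambda>i. u i * x i)"
proof -
  have s: "summable (\<lambda>i. \<bar>u i\<bar> * B)" using assms(1) unfolding ell1_def by (simp add: summable_mult2)
  show ?thesis
  proof (rule summable_comparison_test'[OF s])
    fix i show "norm (u i * x i) \<le> \<bar>u i\<bar> * B"
      using assms(2) by (simp add: abs_mult mult_left_mono)
  qed
qed

lemma ell1_add: "u \<in> ell1 \<Longrightarrow> v \<in> ell1 \<Longrightarrow> (\<lambda>i. u i + v i) \<in> ell1"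
  unfolding ell1_def
proof (clarify)
  assume u: "summable (\<lambda>i. \<bar>u i\<bar>)" and v: "summable (\<lambda>i. \<bar>v i\<bar>)"
  show "summable (\<lambda>i. \<bar>u i + v i\<bar>)"
    by (rule summable_comparison_test'[OF summable_add[OF u v]]) (simp add: abs_triangle_ineq)
qed

lemma ell1_scale: "u \<in> ell1 \<Longrightarrow> (\<lambda>i. t * u i) \<in> ell1"
  unfolding ell1_def by (simp add: abs_mult summable_mult)

lemma l1norm_nonneg: "u \<in> ell1 \<Longrightarrow> 0 \<le> l1norm u"
  unfolding ell1_def l1norm_def by (simp add: suminf_nonneg)

lemma l1norm_add: "u \<in> ell1 \<Longrightarrow> v \<in> ell1 \<Longrightarrow> l1norm (\<lambda>i. u i + v i) \<le> l1norm u + l1norm v"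
  unfolding l1norm_def
proof -
  assume u: "u \<in> ell1" and v: "v \<in> ell1"
  have su: "summable (\<lambda>i. \<bar>u i\<bar>)" and sv: "summable (\<lambda>i. \<bar>v i\<bar>)" using u v unfolding ell1_def by auto
  have suv: "summable (\<lambda>i. \<bar>u i + v i\<bar>)" using ell1_add[OF u v] unfolding ell1_def by auto
  have "(\<Sum>i. \<bar>u i + v i\<bar>) \<le> (\<Sum>i. \<bar>u i\<bar> + \<bar>v i\<bar>)"
    by (rule suminf_le) (auto simp: abs_triangle_ineq suv summable_add[OF su sv])
  also have "\<dots> = (\<Sum>i. \<bar>u i\<bar>) + (\<Sum>i. \<bar>v i\<bar>)" by (rule suminf_add[OF su sv, symmetric])
  finally show "(\<Sum>i. \<bar>u i + v i\<bar>) \<le> (\<Sum>i. \<bar>u i\<bar>) + (\<Sum>i. \<bar>v i\<bar>)" .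
qed

lemma l1norm_scale: "u \<in> ell1 \<Longrightarrow> l1norm (\<lambda>i. t * u i) = \<bar>t\<bar> * l1norm u"
  unfolding l1norm_def ell1_def by (simp add: abs_mult suminf_mult)

lemma sum_unit: "(\<Sum>j. (if j = i then 1 else 0) * x j) = (x i :: real)"
proof -
  have "(\<lambda>j. (if j = i then 1 else 0) * x j) = (\<lambda>j. if j = i then x j else 0)" by auto
  then show ?thesis using sums_single[of i x] sums_unique by metis
qed

lemma unit_ell1: "(\<lambda>j. if j = i then 1 else 0::real) \<in> ell1"
  and unit_norm: "l1norm (\<lambda>j. if j = i then 1 else 0::real) = 1"
proof -
  have e: "(\<lambda>j. \<bar>if j = i then 1 else 0::real\<bar>) = (\<lambda>j. if j = i then 1 else 0)" by auto
  have "(\<lambda>j. if j = i then 1 else 0::real) sums 1" using sums_single[of i "\<lambda>_. 1::real"] by simp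
  then show "(\<lambda>j. if j = i then 1 else 0::real) \<in> ell1" "l1norm (\<lambda>j. if j = i then 1 else 0::real) = 1"
    unfolding ell1_def l1norm_def e by (auto simp: sums_iff)
qed

theorem proposition2:
  fixes A :: "'h::{real_inner, complete_space} \<Rightarrow> (nat \<Rightarrow> real)"
    and Astar :: "(nat \<Rightarrow> real) \<Rightarrow> 'h"
    and Hn :: "'h set" and n :: nat and f un :: _
  assumes "bounded_linear_c0 A"
    and "is_adjoint_l1 A Astar"
    and "subspace Hn"
    and "\<exists>B. finite B \<and> independent B \<and> span B = Hn \<and> card B = n"
    and "\<forall>z\<in>Hn. A z = (\<lambda>_. 0) \<longrightarrow> z = 0"
  shows "is_min_solution Astar Hn f un \<longleftrightarrow>
           un \<in> En A Hn \<and> constraint Astar Hn f un"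
proof -
  obtain K where K: "\<forall>x i. \<bar>A x i\<bar> \<le> K * norm x"
    and Aadd: "\<forall>x y i. A (x + y) i = A x i + A y i"
    and Asc: "\<forall>c x i. A (c *\<^sub>R x) i = c * A x i"
    using assms(1) unfolding bounded_linear_c0_def by blast
  have adj: "\<And>u z. u \<in> ell1 \<Longrightarrow> inner z (Astar u) = (\<Sum>i. u i * A z i)"
    using assms(2) unfolding is_adjoint_l1_def by (simp add: inner_commute)
  define phi where "phi u z = (\<Sum>i. u i * A z i)" for u z
  have summ: "summable (\<lambda>i. u i * A z i)" if "u \<in> ell1" for u z
    using ell1_summ[OF that, of "A z" "K * norm z"] K by blast
  have phi_add_z: "phi u (x + y) = phi u x + phi u y" if "u \<in> ell1" for u x y
  proof -
    have "phi u (x + y) = (\<Sum>i. u i * A x i + u i * A y i)"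
      unfolding phi_def using Aadd by (simp add: distrib_left)
    also have "\<dots> = phi u x + phi u y" unfolding phi_def
      by (rule suminf_add[OF summ[OF that] summ[OF that], symmetric])
    finally show ?thesis .
  qed
  have phi_sc_z: "phi u (t *\<^sub>R x) = t * phi u x" if "u \<in> ell1" for u x t
  proof -
    have "phi u (t *\<^sub>R x) = (\<Sum>i. t * (u i * A x i))"
      unfolding phi_def using Asc by (simp add: ac_simps)
    also have "\<dots> = t * phi u x" unfolding phi_def
      by (rule suminf_mult[OF summ[OF that]])
    finally show ?thesis .
  qed
  have phi_add_u: "phi (\<lambda>i. u i + v i) z = phi u z + phi v z" if "u \<in> ell1" "v \<in> ell1" for u v z
  proof -
    have "phi (\<lambda>i. u i + v i) z = (\<Sum>i. u i * A z i + v i * A z i)"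
      unfolding phi_def by (simp add: distrib_right)
    also have "\<dots> = phi u z + phi v z" unfolding phi_def
      by (rule suminf_add[OF summ[OF that(1)] summ[OF that(2)], symmetric])
    finally show ?thesis .
  qed
  have phi_sc_u: "phi (\<lambda>i. t * u i) z = t * phi u z" if "u \<in> ell1" for u z t
  proof -
    have "phi (\<lambda>i. t * u i) z = (\<Sum>i. t * (u i * A z i))"
      unfolding phi_def by (simp add: ac_simps)
    also have "\<dots> = t * phi u z" unfolding phi_def
      by (rule suminf_mult[OF summ[OF that]])
    finally show ?thesis .
  qed
  show ?thesis
  proof
    assume ms: "is_min_solution Astar Hn f un"
    then have un: "un \<in> ell1" and cun: "constraint Astar Hn f un"
      and minu: "\<forall>u\<in>ell1. constraint Astar Hn f u \<longrightarrow> l1norm un \<le> l1norm u"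
      unfolding is_min_solution_def by auto
    obtain B where B: "finite B" "span B = Hn" using assms(4) by blast
    obtain C where C: "finite C" "span C = span B" "pairwise orthogonal C"
      using basis_orthogonal[OF B(1)] by blast
    define C0 where "C0 = C - {0}"
    have C0: "finite C0" "pairwise orthogonal C0" "0 \<notin> C0"
      using C unfolding C0_def by (auto simp: pairwise_def)
    have HnC: "Hn = span C0" unfolding C0_def using C(2) B(2) by simp
    have rep_u: "\<exists>y\<in>Hn. \<forall>z\<in>Hn. y \<bullet> z = phi u z" if "u \<in> ell1" for u
      unfolding HnC
      by (rule repr[OF C0]) (use phi_add_z[OF that] phi_sc_z[OF that] in auto)
    define Rep where "Rep y = {u \<in> ell1. \<forall>z\<in>Hn. y \<bullet> z = phi u z}" for y
    define q where "q y = Inf (l1norm ` Rep y)" for y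
    have RepAdd: "(\<lambda>i. u i + v i) \<in> Rep (x + y)" if "u \<in> Rep x" "v \<in> Rep y" for u v x y
      using that ell1_add phi_add_u unfolding Rep_def by (auto simp: inner_add_left)
    have RepSc: "(\<lambda>i. t * u i) \<in> Rep (t *\<^sub>R x)" if "u \<in> Rep x" for u x t
      using that ell1_scale phi_sc_u unfolding Rep_def by auto
    have zero_ell1: "(\<lambda>_. 0::real) \<in> ell1" unfolding ell1_def by simp
    have Rep0: "(\<lambda>_. 0::real) \<in> Rep 0" unfolding Rep_def phi_def using zero_ell1 by simp
    define e where "e i = (\<lambda>j::nat. if j = i then 1 else 0::real)" for i :: nat
    have e_ell1: "e i \<in> ell1" for i unfolding e_def by (rule unit_ell1)
    have e_norm: "l1norm (e i) = 1" for i unfolding e_def by (rule unit_norm)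
    have e_phi: "phi (e i) z = A z i" for i z unfolding e_def phi_def by (rule sum_unit)
    have "\<forall>i. \<exists>y. y \<in> Hn \<and> (\<forall>z\<in>Hn. y \<bullet> z = A z i)"
    proof
      fix i
      obtain y where "y \<in> Hn" "\<forall>z\<in>Hn. y \<bullet> z = phi (e i) z" using rep_u[OF e_ell1[of i]] by blast
      then show "\<exists>y. y \<in> Hn \<and> (\<forall>z\<in>Hn. y \<bullet> z = A z i)" using e_phi by auto
    qed
    then obtain s where s0: "\<forall>i. s i \<in> Hn \<and> (\<forall>z\<in>Hn. s i \<bullet> z = A z i)"
      using choice[of "\<lambda>i y. y \<in> Hn \<and> (\<forall>z\<in>Hn. y \<bullet> z = A z i)"] by blast
    have s: "\<And>i. s i \<in> Hn" "\<And>i z. z \<in> Hn \<Longrightarrow> s i \<bullet> z = A z i" using s0 by auto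
    have sRep: "e i \<in> Rep (s i)" for i unfolding Rep_def using e_ell1 s e_phi by simp
    define R where "R = {y \<in> Hn. Rep y \<noteq> {}}"
    have subR: "subspace R" unfolding subspace_def R_def
    proof (intro conjI ballI allI)
      show "0 \<in> {y \<in> Hn. Rep y \<noteq> {}}" using Rep0 assms(3) subspace_0 by blast
    next
      fix x y assume x: "x \<in> {y \<in> Hn. Rep y \<noteq> {}}" and y: "y \<in> {y \<in> Hn. Rep y \<noteq> {}}"
      then obtain u v where "u \<in> Rep x" "v \<in> Rep y" by auto
      then have "Rep (x + y) \<noteq> {}" using RepAdd by blast
      moreover have "x + y \<in> Hn" using x y assms(3) by (simp add: subspace_add)
      ultimately show "x + y \<in> {y \<in> Hn. Rep y \<noteq> {}}" by simp
    next
      fix c x assume x: "x \<in> {y \<in> Hn. Rep y \<noteq> {}}"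
      then obtain u where "u \<in> Rep x" by auto
      then have "Rep (c *\<^sub>R x) \<noteq> {}" using RepSc by blast
      moreover have "c *\<^sub>R x \<in> Hn" using x assms(3) by (simp add: subspace_scale)
      ultimately show "c *\<^sub>R x \<in> {y \<in> Hn. Rep y \<noteq> {}}" by simp
    qed
    have RHn: "R \<subseteq> Hn" unfolding R_def by auto
    have sR: "s i \<in> R" for i unfolding R_def using s(1) sRep by blast
    obtain BR where BR: "BR \<subseteq> R" "independent BR" "R \<subseteq> span BR" "card BR = dim R"
      by (rule basis_exists[of R])
    have "BR \<subseteq> span C0" using BR(1) RHn unfolding HnC by (rule subset_trans)
    then have fBR: "finite BR" using independent_span_bound[OF C0(1) BR(2)] by simp
    obtain C2 where C2: "finite C2" "span C2 = span BR" "pairwise orthogonal C2"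
      using basis_orthogonal[OF fBR] by blast
    define C2' where "C2' = C2 - {0}"
    have C2': "finite C2'" "pairwise orthogonal C2'" "0 \<notin> C2'"
      using C2 unfolding C2'_def by (auto simp: pairwise_def)
    have spanBR: "span BR = R"
      using span_minimal[OF BR(1) subR] BR(3) by (rule subset_antisym)
    have RC2: "span C2' = R" unfolding C2'_def span_delete_0 C2(2) spanBR ..
    have C0R: "C0 \<subseteq> R"
    proof
      fix c assume cC: "c \<in> C0"
      have cHn: "c \<in> Hn" using cC HnC span_base by blast
      obtain p where p: "p \<in> span C2'" "\<forall>v\<in>span C2'. p \<bullet> v = c \<bullet> v"
        using repr[OF C2', of "\<lambda>v. c \<bullet> v"] by (auto simp: inner_add_right)
      have pR: "p \<in> R" using p(1) RC2 by simp
      have zHn: "c - p \<in> Hn" using cHn pR RHn assms(3) subspace_diff by blast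
      have "A (c - p) i = 0" for i
      proof -
        have "A (c - p) i = s i \<bullet> (c - p)" using s(2)[OF zHn] by simp
        also have "\<dots> = c \<bullet> s i - p \<bullet> s i" by (simp add: inner_diff_right inner_commute)
        also have "p \<bullet> s i = c \<bullet> s i" using p(2) sR RC2 by simp
        finally show ?thesis by simp
      qed
      then have "A (c - p) = (\<lambda>_. 0)" by auto
      then have "c - p = 0" using assms(5) zHn by blast
      then show "c \<in> R" using pR by simp
    qed
    have surj: "Rep y \<noteq> {}" if "y \<in> Hn" for y
    proof -
      have "Hn \<subseteq> R" unfolding HnC by (rule span_minimal[OF C0R subR])
      then show ?thesis using that unfolding R_def by blast
    qed
    have bdd: "bdd_below (l1norm ` Rep y)" for y
      unfolding Rep_def by (rule bdd_belowI[of _ 0]) (auto intro: l1norm_nonneg)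
    have qle: "q y \<le> l1norm u" if "u \<in> Rep y" for u y
      unfolding q_def by (rule cInf_lower) (use that bdd in auto)
    have qge: "c \<le> q y" if "y \<in> Hn" "\<And>u. u \<in> Rep y \<Longrightarrow> c \<le> l1norm u" for c y
      unfolding q_def by (rule cInf_greatest) (use that surj in auto)
    have Rep_ell1: "u \<in> ell1" if "u \<in> Rep y" for u y using that unfolding Rep_def by simp
    have sub: "\<forall>x\<in>span C0. \<forall>y\<in>span C0. q (x+y) \<le> q x + q y"
    proof (intro ballI)
      fix x y assume "x \<in> span C0" "y \<in> span C0"
      then have xy: "x \<in> Hn" "y \<in> Hn" using HnC by auto
      have "q (x + y) - l1norm v \<le> q x" if v: "v \<in> Rep y" for v
      proof (rule qge[OF xy(1)])
        fix u assume u: "u \<in> Rep x"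
        have "q (x + y) \<le> l1norm (\<lambda>i. u i + v i)" by (rule qle[OF RepAdd[OF u v]])
        also have "\<dots> \<le> l1norm u + l1norm v" by (rule l1norm_add[OF Rep_ell1[OF u] Rep_ell1[OF v]])
        finally show "q (x + y) - l1norm v \<le> l1norm u" by simp
      qed
      then have "q (x + y) - q x \<le> q y"
        using qge[OF xy(2), of "q (x + y) - q x"] by fastforce
      then show "q (x + y) \<le> q x + q y" by simp
    qed
    have qsc: "q (t *\<^sub>R x) \<le> t * q x" if "x \<in> Hn" "t > 0" for x t
    proof -
      have "q (t *\<^sub>R x) / t \<le> l1norm u" if u: "u \<in> Rep x" for u
      proof -
        have "q (t *\<^sub>R x) \<le> l1norm (\<lambda>i. t * u i)" by (rule qle[OF RepSc[OF u]])
        also have "\<dots> = t * l1norm u" using l1norm_scale[OF Rep_ell1[OF u]] \<open>t > 0\<close> by simp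
        finally show ?thesis using \<open>t > 0\<close> by (simp add: divide_le_eq mult.commute)
      qed
      then have "q (t *\<^sub>R x) / t \<le> q x" by (rule qge[OF that(1)])
      then show ?thesis using \<open>t > 0\<close> by (simp add: divide_le_eq mult.commute)
    qed
    have q0: "q 0 = 0"
    proof -
      have "q 0 \<le> 0" using qle[OF Rep0] unfolding l1norm_def by simp
      moreover have "0 \<le> q 0" using qge[of 0 0] assms(3) subspace_0 l1norm_nonneg Rep_ell1 by blast
      ultimately show ?thesis by simp
    qed
    have hom: "\<forall>x\<in>span C0. \<forall>t\<ge>0. q (t *\<^sub>R x) = t * q x"
    proof (intro ballI allI impI)
      fix x and t :: real assume x: "x \<in> span C0" and t: "t \<ge> 0"
      then have xH: "x \<in> Hn" using HnC by simp
      show "q (t *\<^sub>R x) = t * q x"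
      proof (cases "t = 0")
        case True then show ?thesis using q0 by simp
      next
        case False
        then have tp: "t > 0" using t by simp
        have txH: "t *\<^sub>R x \<in> Hn" using xH assms(3) subspace_scale by blast
        have "q ((1/t) *\<^sub>R (t *\<^sub>R x)) \<le> (1/t) * q (t *\<^sub>R x)"
          by (rule qsc[OF txH]) (use tp in simp)
        moreover have "(1/t) *\<^sub>R (t *\<^sub>R x) = x" using tp by simp
        ultimately have "q x \<le> (1/t) * q (t *\<^sub>R x)" by simp
        then have "t * q x \<le> q (t *\<^sub>R x)" using tp by (simp add: field_simps)
        then show ?thesis using qsc[OF xH tp] by simp
      qed
    qed
    obtain y0 where y0: "y0 \<in> Hn" "\<forall>z\<in>Hn. y0 \<bullet> z = phi un z" using rep_u[OF un] by blast
    have unRep: "un \<in> Rep y0" unfolding Rep_def using un y0 by simp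
    have qy0: "q y0 = l1norm un"
    proof -
      have "l1norm un \<le> q y0"
      proof (rule qge[OF y0(1)])
        fix u assume u: "u \<in> Rep y0"
        have "constraint Astar Hn f u"
          unfolding constraint_def
        proof
          fix z assume z: "z \<in> Hn"
          have "inner z (Astar u) = phi u z" using adj Rep_ell1[OF u] unfolding phi_def by simp
          also have "\<dots> = y0 \<bullet> z" using u z unfolding Rep_def by simp
          also have "\<dots> = phi un z" using y0 z by simp
          also have "\<dots> = inner z (Astar un)" using adj un unfolding phi_def by simp
          also have "\<dots> = inner z f" using cun z unfolding constraint_def by simp
          finally show "inner z (Astar u) = inner z f" .
        qed
        then show "l1norm un \<le> l1norm u" using minu Rep_ell1[OF u] by blast
      qed
      then show ?thesis using qle[OF unRep] by simp
    qed
    obtain G where G: "\<forall>x\<in>span C0. \<forall>y\<in>span C0. G (x+y) = G x + G y"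
      "\<forall>x\<in>span C0. \<forall>t. G (t *\<^sub>R x) = t * G x" "\<forall>x\<in>span C0. G x \<le> q x" "G y0 = q y0"
    proof -
      have "y0 \<in> span C0" using y0(1) HnC by simp
      from hb_main[OF C0(1) sub hom this] show ?thesis using that by blast
    qed
    obtain w where w: "w \<in> span C0" "\<forall>z\<in>span C0. w \<bullet> z = G z"
      using repr[OF C0 G(1,2)] by blast
    have wH: "w \<in> Hn" using w(1) HnC by simp
    have key: "phi u w \<le> l1norm u" if u: "u \<in> ell1" for u
    proof -
      obtain y where y: "y \<in> Hn" "\<forall>z\<in>Hn. y \<bullet> z = phi u z" using rep_u[OF u] by blast
      have uR: "u \<in> Rep y" unfolding Rep_def using u y by simp
      have "phi u w = y \<bullet> w" using y wH by simp
      also have "\<dots> = G y" using w(2) y(1) HnC inner_commute[of y w] by simp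
      also have "\<dots> \<le> q y" using G(3) y(1) HnC by simp
      also have "\<dots> \<le> l1norm u" by (rule qle[OF uR])
      finally show ?thesis .
    qed
    have bnd: "\<bar>A w i\<bar> \<le> 1" for i
    proof -
      have "A w i \<le> 1" using key[OF e_ell1[of i]] e_phi e_norm by simp
      moreover have "- A w i \<le> 1"
      proof -
        have "phi (\<lambda>j. (-1) * e i j) w \<le> l1norm (\<lambda>j. (-1) * e i j)"
          by (rule key[OF ell1_scale[OF e_ell1]])
        moreover have "phi (\<lambda>j. (-1) * e i j) w = (-1) * A w i"
          using phi_sc_u[OF e_ell1[of i], where z=w and t="-1"] e_phi by simp
        moreover have "l1norm (\<lambda>j. (-1) * e i j) = 1"
          using l1norm_scale[OF e_ell1[of i], of "-1"] e_norm by simp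
        ultimately show ?thesis by simp
      qed
      ultimately show ?thesis by simp
    qed
    have "(\<Sum>i. A w i * un i) = phi un w" unfolding phi_def by (simp add: mult.commute)
    also have "\<dots> = y0 \<bullet> w" using y0 wH by simp
    also have "\<dots> = G y0" using w(2) y0(1) HnC inner_commute[of y0 w] by simp
    also have "\<dots> = l1norm un" using G(4) qy0 by simp
    finally have "A w \<in> subdiff_l1 un" unfolding subdiff_l1_def using bnd by simp
    then have "un \<in> En A Hn" unfolding En_def using un wH by blast
    then show "un \<in> En A Hn \<and> constraint Astar Hn f un" using cun by simp
  next
    assume "un \<in> En A Hn \<and> constraint Astar Hn f un"
    then have un: "un \<in> ell1" and cun: "constraint Astar Hn f un"
      and ex: "subdiff_l1 un \<inter> A ` Hn \<noteq> {}" unfolding En_def by auto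
    obtain z0 where z0: "z0 \<in> Hn" "A z0 \<in> subdiff_l1 un" using ex by blast
    have b1: "\<forall>i. \<bar>A z0 i\<bar> \<le> 1" and eq: "(\<Sum>i. A z0 i * un i) = l1norm un"
      using z0(2) unfolding subdiff_l1_def by auto
    have "l1norm un \<le> l1norm u" if u: "u \<in> ell1" and cu: "constraint Astar Hn f u" for u
    proof -
      have "l1norm un = (\<Sum>i. un i * A z0 i)" using eq by (simp add: mult.commute)
      also have "\<dots> = inner z0 (Astar un)" using adj un by simp
      also have "\<dots> = inner z0 f" using cun z0(1) unfolding constraint_def by simp
      also have "\<dots> = inner z0 (Astar u)" using cu z0(1) unfolding constraint_def by simp
      also have "\<dots> = (\<Sum>i. u i * A z0 i)" using adj u by simp
      also have "\<dots> \<le> (\<Sum>i. \<bar>u i\<bar>)"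
      proof (rule suminf_le)
        show "u i * A z0 i \<le> \<bar>u i\<bar>" for i
        proof -
          have "u i * A z0 i \<le> \<bar>u i * A z0 i\<bar>" by simp
          also have "\<dots> = \<bar>u i\<bar> * \<bar>A z0 i\<bar>" by (simp add: abs_mult)
          also have "\<dots> \<le> \<bar>u i\<bar> * 1" using b1 by (intro mult_left_mono) auto
          finally show ?thesis by simp
        qed
        show "summable (\<lambda>i. u i * A z0 i)" using ell1_summ[OF u b1] .
        show "summable (\<lambda>i. \<bar>u i\<bar>)" using u unfolding ell1_def by simp
      qed
      finally show ?thesis unfolding l1norm_def .
    qed
    then show "is_min_solution Astar Hn f un" unfolding is_min_solution_def using un cun by blast
  qed
qed


end
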